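(* Fix $k\in\{0,1,\infty\}$ and let $\mathbb{L}=\{L\in\mathbb{R}^{n_x\times n_y}:\rho(A-LC)<1\}$. For every $L\in\mathbb{L}$, $$J_k(L)=\max\Big\{\lambda\in\mathbb{R}_+:\ \tfrac12 D_a^\top\Phi(k,L)^\top\Sigma_{r_\omega}^{-1}(L)\Phi(k,L)D_a-\lambda D_a^\top W D_a\succeq 0\Big\}.$$ Consequently, the observer design problem $\max_{L\in\mathbb{R}^{n_x\times n_y}}\{J_k(L):\rho(A-LC)<1\}$ can be reformulated as the joint problem $$\max_{L\in\mathbb{R}^{n_x\times n_y},\ \lambda\in\mathbb{R}_+}\ \lambda\quad\text{s.t.}\quad \tfrac12 D_a^\top\Phi(k,L)^\top\Sigma_{r_\omega}^{-1}(L)\Phi(k,L)D_a-\lambda D_a^\top W D_a\succeq 0,\qquad \rho(A-LC)<1,$$ which has the same optimal value.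
   Context: Consider the discrete-time system $x(k+1)=Ax(k)+Bu(k)+B_\omega\omega(k)$, $y(k)=Cx(k)+D_\omega\omega(k)+y_a(k)$, with $x(k)\in\mathbb{R}^{n_x}$, $y(k)\in\mathbb{R}^{n_y}$, $\omega(k)\in\mathbb{R}^{n_\omega}$ i.i.d. Gaussian $\mathcal N(0,I)$, $(A,C)$ detectable and $(A,B_\omega)$ stabilizable. An observer $\hat x(k+1)=A\hat x(k)+Bu(k)+L(y(k)-C\hat x(k))$ with gain $L\in\mathbb{R}^{n_x\times n_y}$ produces the residual $r(k)=y(k)-C\hat x(k)$. The attack is $y_a(k)=0$ for $k<0$ and $y_a(k)=D_a\bar a$ for $k\ge 0$, where $\bar a\in\mathbb{R}^{n_a}$ and $D_a\in\mathbb{R}^{n_y\times n_a}$ has entries $(j_i,i)=1$ for the indices $j_1<\dots<j_{n_a}$ of compromised sensors and all other entries $0$. $W\in\mathbb{R}^{n_y\times n_y}$ is symmetric positive semidefinite. $\rho(\cdot)$ is the spectral radius and $\mathbb{R}_+$ the positive reals. For $L$ with $\rho(A-LC)<1$, $\Sigma_{\tilde x}(L)$ is the solution of $\Sigma=(A-LC)\Sigma(A-LC)^\top+(B_\omega-LD_\omega)(B_\omega-LD_\omega)^\top$ and $\Sigma_{r_\omega}(L)=C\Sigma_{\tilde x}(L)C^\top+D_\omega D_\omega^\top$ (assumed invertible where its inverse appears). Define $\Phi(0,L)=I$, $\Phi(k,L)=I-C\sum_{l=0}^{k-1}(A-LC)^{k-l-1}L$ for $k\ge1$, and $\Phi(\infty,L)=\lim_{k\to\infty}\Phi(k,L)=I-C(I-A+LC)^{-1}L$.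 Define $$J_k(L)=\min_{\bar a\in\mathbb{R}^{n_a}}\ \tfrac12\bar a^\top D_a^\top\Phi(k,L)^\top\Sigma_{r_\omega}^{-1}(L)\Phi(k,L)D_a\bar a\quad\text{s.t.}\quad \bar a^\top D_a^\top W D_a\bar a\ge 1,$$ the smallest Kullback–Leibler divergence between attacked and attack-free residuals at time $k$ over attacks of impact at least $1$. *)

theory Defs
  imports "Jordan_Normal_Form.Spectral_Radius" "HOL-Library.Extended_Real" "HOL-Library.Extended_Nat"
begin

definition rho :: "real mat \<Rightarrow> real" where
  "rho M = spectral_radius (map_mat complex_of_real M)"

definition mat_inv :: "real mat \<Rightarrow> real mat" where
  "mat_inv M = (SOME N. N \<in> carrier_mat (dim_row M) (dim_row M) \<and> inverts_mat M N \<and> inverts_mat N M)"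

definition psd :: "real mat \<Rightarrow> bool" where
  "psd M \<longleftrightarrow> square_mat M \<and> (\<forall>x \<in> carrier_vec (dim_row M). 0 \<le> x \<bullet> (M *\<^sub>v x))"

definition detectable :: "real mat \<Rightarrow> real mat \<Rightarrow> bool" where
  "detectable A C \<longleftrightarrow> (\<exists>L \<in> carrier_mat (dim_row A) (dim_row C). rho (A - L * C) < 1)"

definition stabilizable :: "real mat \<Rightarrow> real mat \<Rightarrow> bool" where
  "stabilizable A B \<longleftrightarrow> (\<exists>K \<in> carrier_mat (dim_col B) (dim_row A). rho (A - B * K) < 1)"

definition attack_mat :: "nat \<Rightarrow> nat \<Rightarrow> (nat \<Rightarrow> nat) \<Rightarrow> real mat" where
  "attack_mat ny na j = mat ny na (\<lambda>(r, i). if r = j i then 1 else 0)"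

definition Sigma_x :: "real mat \<Rightarrow> real mat \<Rightarrow> real mat \<Rightarrow> real mat \<Rightarrow> real mat \<Rightarrow> real mat" where
  "Sigma_x A Bw C Dw L = (THE S. S \<in> carrier_mat (dim_row A) (dim_row A) \<and>
     S = (A - L * C) * S * transpose_mat (A - L * C)
         + (Bw - L * Dw) * transpose_mat (Bw - L * Dw))"

definition Sigma_r :: "real mat \<Rightarrow> real mat \<Rightarrow> real mat \<Rightarrow> real mat \<Rightarrow> real mat \<Rightarrow> real mat" where
  "Sigma_r A Bw C Dw L = C * Sigma_x A Bw C Dw L * transpose_mat C + Dw * transpose_mat Dw"

definition Phi_fin :: "real mat \<Rightarrow> real mat \<Rightarrow> nat \<Rightarrow> real mat \<Rightarrow> real mat" where
  "Phi_fin A C k L = 1\<^sub>m (dim_row C) - C *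
     fold (\<lambda>l S. S + ((A - L * C) ^\<^sub>m (k - l - 1)) * L) [0..<k] (0\<^sub>m (dim_row A) (dim_row C))"

definition Phi_inf :: "real mat \<Rightarrow> real mat \<Rightarrow> real mat \<Rightarrow> real mat" where
  "Phi_inf A C L = 1\<^sub>m (dim_row C) - C * mat_inv (1\<^sub>m (dim_row A) - A + L * C) * L"

definition Phi :: "real mat \<Rightarrow> real mat \<Rightarrow> enat \<Rightarrow> real mat \<Rightarrow> real mat" where
  "Phi A C k L = (case k of enat n \<Rightarrow> Phi_fin A C n L | \<infinity> \<Rightarrow> Phi_inf A C L)"

definition KL_mat :: "real mat \<Rightarrow> real mat \<Rightarrow> real mat \<Rightarrow> real mat \<Rightarrow> real mat \<Rightarrow> enat \<Rightarrow> real mat \<Rightarrow> real mat" where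
  "KL_mat A Bw C Dw Da k L = transpose_mat Da * transpose_mat (Phi A C k L)
      * mat_inv (Sigma_r A Bw C Dw L) * Phi A C k L * Da"

definition J :: "real mat \<Rightarrow> real mat \<Rightarrow> real mat \<Rightarrow> real mat \<Rightarrow> real mat \<Rightarrow> real mat \<Rightarrow> enat \<Rightarrow> real mat \<Rightarrow> ereal" where
  "J A Bw C Dw W Da k L = Inf { ereal (1/2 * (a \<bullet> (KL_mat A Bw C Dw Da k L *\<^sub>v a))) | a.
      a \<in> carrier_vec (dim_col Da) \<and> a \<bullet> ((transpose_mat Da * W * Da) *\<^sub>v a) \<ge> 1 }"

end

theory Submission imports Defs begin

lemma ereal_Sup_interval:
  assumes JJ: "0 \<le> JJ"
  shows "Sup {ereal lam | lam. lam \<ge> 0 \<and> ereal lam \<le> JJ} = JJ"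
proof (rule antisym)
  show "Sup {ereal lam | lam. lam \<ge> 0 \<and> ereal lam \<le> JJ} \<le> JJ"
    by (rule Sup_least) auto
  show "JJ \<le> Sup {ereal lam | lam. lam \<ge> 0 \<and> ereal lam \<le> JJ}"
  proof (subst le_Sup_iff, intro allI impI)
    fix y assume y: "y < JJ"
    show "\<exists>a\<in>{ereal lam | lam. lam \<ge> 0 \<and> ereal lam \<le> JJ}. y < a"
    proof (cases "y < 0")
      case True
      then show ?thesis using JJ by (intro bexI[of _ "ereal 0"]) (auto simp: zero_ereal_def)
    next
      case False
      from ereal_dense2[OF y] obtain z where z: "y < ereal z" "ereal z < JJ" by auto
      with False have "z \<ge> 0"
        by (metis ereal_less_eq(5) linorder_not_less order_less_imp_le order_trans)
      with z show ?thesis by (intro bexI[of _ "ereal z"]) auto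
    qed
  qed
qed

lemma slemma:
  fixes q m :: "'v \<Rightarrow> real" and V :: "'v set" and sc :: "real \<Rightarrow> 'v \<Rightarrow> 'v"
  assumes scV: "\<And>x t. x \<in> V \<Longrightarrow> sc t x \<in> V"
    and scq: "\<And>x t. x \<in> V \<Longrightarrow> q (sc t x) = t^2 * q x"
    and scm: "\<And>x t. x \<in> V \<Longrightarrow> m (sc t x) = t^2 * m x"
    and q0: "\<And>x. x \<in> V \<Longrightarrow> 0 \<le> q x"
    and m0: "\<And>x. x \<in> V \<Longrightarrow> 0 \<le> m x"
  shows "Inf {ereal (1/2 * q a) | a. a \<in> V \<and> m a \<ge> 1}
       = Sup {ereal lam | lam. lam \<ge> 0 \<and> (\<forall>x\<in>V. 0 \<le> 1/2 * q x - lam * m x)}"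
proof -
  define JJ where "JJ = Inf {ereal (1/2 * q a) | a. a \<in> V \<and> m a \<ge> 1}"
  have J0: "0 \<le> JJ" unfolding JJ_def by (rule Inf_greatest) (auto simp: q0 zero_ereal_def)
  have eq: "{ereal lam | lam. lam \<ge> 0 \<and> (\<forall>x\<in>V. 0 \<le> 1/2 * q x - lam * m x)}
          = {ereal lam | lam. lam \<ge> 0 \<and> ereal lam \<le> JJ}"
  proof -
    have "(\<forall>x\<in>V. 0 \<le> 1/2 * q x - lam * m x) \<longleftrightarrow> ereal lam \<le> JJ" if l: "lam \<ge> 0" for lam
    proof
      assume H: "\<forall>x\<in>V. 0 \<le> 1/2 * q x - lam * m x"
      show "ereal lam \<le> JJ" unfolding JJ_def
      proof (rule Inf_greatest, clarify)
        fix a assume a: "a \<in> V" "1 \<le> m a"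
        have "lam \<le> lam * m a" using l a by (simp add: mult_le_cancel_left1)
        also have "\<dots> \<le> 1/2 * q a" using H a by auto
        finally show "ereal lam \<le> ereal (1/2 * q a)" by simp
      qed
    next
      assume H: "ereal lam \<le> JJ"
      show "\<forall>x\<in>V. 0 \<le> 1/2 * q x - lam * m x"
      proof
        fix x assume x: "x \<in> V"
        show "0 \<le> 1/2 * q x - lam * m x"
        proof (cases "m x = 0")
          case True then show ?thesis using q0[OF x] by simp
        next
          case False
          hence mp: "m x > 0" using m0[OF x] by simp
          define t where "t = 1 / sqrt (m x)"
          have t2: "t^2 = 1 / m x" unfolding t_def using mp by (simp add: power_divide)
          have "m (sc t x) = 1" using scm[OF x] t2 mp by simp
          hence "JJ \<le> ereal (1/2 * q (sc t x))" unfolding JJ_def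
            using scV[OF x] by (intro Inf_lower) auto
          with H have "ereal lam \<le> ereal (1/2 * q (sc t x))" by (rule order_trans)
          hence "lam \<le> 1/2 * q (sc t x)" by simp
          also have "\<dots> = 1/2 * q x / m x" using scq[OF x] t2 by simp
          finally have "lam * m x \<le> 1/2 * q x" using mp by (simp add: pos_le_divide_eq)
          then show ?thesis by simp
        qed
      qed
    qed
    then show ?thesis by blast
  qed
  show ?thesis unfolding eq JJ_def[symmetric] using ereal_Sup_interval[OF J0] by simp
qed

lemma smult_mat_vec: "A \<in> carrier_mat n m \<Longrightarrow> v \<in> carrier_vec m \<Longrightarrow> (c \<cdot>\<^sub>m A) *\<^sub>v v = c \<cdot>\<^sub>v (A *\<^sub>v v)"
  by (rule eq_vecI) (auto simp: scalar_prod_def sum_distrib_left ac_simps)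

lemma pow_smult_mat:
  assumes G: "(G :: 'a :: comm_ring_1 mat) \<in> carrier_mat n n"
  shows "(c \<cdot>\<^sub>m G) ^\<^sub>m k = (c ^ k) \<cdot>\<^sub>m (G ^\<^sub>m k)"
proof (induct k)
  case 0 then show ?case using G by (auto intro!: eq_matI)
next
  case (Suc k)
  have "(c \<cdot>\<^sub>m G) ^\<^sub>m Suc k = ((c ^ k) \<cdot>\<^sub>m (G ^\<^sub>m k)) * (c \<cdot>\<^sub>m G)" using Suc by simp
  also have "\<dots> = (c ^ Suc k) \<cdot>\<^sub>m (G ^\<^sub>m Suc k)"
    using G by (simp add: mult_smult_distrib[of _ n n _ n] mult_smult_assoc_mat[of _ n n _ n])
      (rule eq_matI, auto)
  finally show ?case .
qed

lemma pow_bound: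
  assumes F: "F \<in> carrier_mat n n" and n: "0 < n" and r: "rho F < 1"
  shows "\<exists>r c. 0 < r \<and> r < 1 \<and> (\<forall>k i j. i < n \<longrightarrow> j < n \<longrightarrow> \<bar>(F ^\<^sub>m k) $$ (i,j)\<bar> \<le> c * r^k)"
proof -
  define Fc where "Fc = map_mat complex_of_real F"
  have Fc: "Fc \<in> carrier_mat n n" using F unfolding Fc_def by simp
  define s where "s = spectral_radius Fc"
  have s1: "s < 1" using r unfolding s_def Fc_def rho_def .
  have s0: "0 \<le> s" using spectral_radius_mem_max(1)[OF Fc n] unfolding s_def by auto
  define r where "r = (1 + s) / 2"
  have r0: "0 < r" and r1: "r < 1" and sr: "s < r" using s0 s1 unfolding r_def by auto
  define Fr where "Fr = (1 / r) \<cdot>\<^sub>m F"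
  have Fr: "Fr \<in> carrier_mat n n" using F unfolding Fr_def by simp
  define G where "G = map_mat complex_of_real Fr"
  have G: "G \<in> carrier_mat n n" using Fr unfolding G_def by simp
  have FcG: "Fc = complex_of_real r \<cdot>\<^sub>m G"
    unfolding Fc_def G_def Fr_def using F r0 by (auto intro!: eq_matI)
  have "spectral_radius G < 1"
  proof -
    from spectral_radius_mem_max(1)[OF G n] obtain ev where ev: "ev \<in> spectrum G"
      and eq: "spectral_radius G = norm ev" by auto
    from ev obtain v where v: "eigenvector G v ev" unfolding spectrum_def eigenvalue_def by auto
    hence vc: "v \<in> carrier_vec n" and vz: "v \<noteq> 0\<^sub>v n" and Gv: "G *\<^sub>v v = ev \<cdot>\<^sub>v v"
      using G unfolding eigenvector_def by auto
    have "Fc *\<^sub>v v = (complex_of_real r * ev) \<cdot>\<^sub>v v"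
      unfolding FcG smult_mat_vec[OF G vc] Gv by (simp add: smult_smult_assoc)
    hence "eigenvector Fc v (complex_of_real r * ev)" using vc vz Fc unfolding eigenvector_def by auto
    hence "norm (complex_of_real r * ev) \<in> norm ` spectrum Fc" unfolding spectrum_def eigenvalue_def by auto
    from spectral_radius_mem_max(2)[OF Fc n this] have "r * norm ev \<le> s" unfolding s_def
      using r0 by (simp add: norm_mult)
    hence "norm ev \<le> s / r" using r0 by (simp add: pos_le_divide_eq mult.commute)
    also have "\<dots> < 1" using sr r0 by simp
    finally show ?thesis using eq by simp
  qed
  from spectral_radius_jnf_norm_bound_less_1_upper_triangular[OF G this]
  obtain c where c: "\<And>k. norm_bound (G ^\<^sub>m k) c" by auto
  have "\<bar>(F ^\<^sub>m k) $$ (i,j)\<bar> \<le> c * r^k" if ij: "i < n" "j < n" for k i j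
  proof -
    have FF: "F = r \<cdot>\<^sub>m Fr" unfolding Fr_def using F r0 by (auto intro!: eq_matI)
    have "F ^\<^sub>m k = (r^k) \<cdot>\<^sub>m (Fr ^\<^sub>m k)" unfolding FF by (rule pow_smult_mat[OF Fr])
    hence e1: "(F ^\<^sub>m k) $$ (i,j) = r^k * (Fr ^\<^sub>m k) $$ (i,j)" using ij Fr by simp
    have "G ^\<^sub>m k = map_mat complex_of_real (Fr ^\<^sub>m k)" unfolding G_def
      by (rule of_real_hom.mat_hom_pow[OF Fr, symmetric])
    hence "(G ^\<^sub>m k) $$ (i,j) = complex_of_real ((Fr ^\<^sub>m k) $$ (i,j))" using ij Fr by simp
    moreover have "norm ((G ^\<^sub>m k) $$ (i,j)) \<le> c" using c[of k] ij G unfolding norm_bound_def by auto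
    ultimately have "\<bar>(Fr ^\<^sub>m k) $$ (i,j)\<bar> \<le> c" by simp
    hence "r^k * \<bar>(Fr ^\<^sub>m k) $$ (i,j)\<bar> \<le> r^k * c" using r0 by (simp add: mult_left_mono)
    thus ?thesis using e1 r0 by (simp add: abs_mult mult.commute)
  qed
  thus ?thesis using r0 r1 by blast
qed

lemma entry3:
  assumes P: "(P :: real mat) \<in> carrier_mat n m" and X: "X \<in> carrier_mat m m" and R: "R \<in> carrier_mat n' m"
    and a: "a < n" and b: "b < n'"
  shows "(P * X * transpose_mat R) $$ (a,b) = (\<Sum>p\<in>{0..<m}. \<Sum>q\<in>{0..<m}. P $$ (a,p) * X $$ (p,q) * R $$ (b,q))"
  using P X R a b
  by (simp add: scalar_prod_def sum_distrib_left sum_distrib_right ac_simps)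

lemma entry3_bound:
  assumes P: "(P :: real mat) \<in> carrier_mat n m" and X: "X \<in> carrier_mat m m" and R: "R \<in> carrier_mat n' m"
    and a: "a < n" and b: "b < n'"
    and eP: "\<And>p. p < m \<Longrightarrow> \<bar>P $$ (a,p)\<bar> \<le> e" and eR: "\<And>p. p < m \<Longrightarrow> \<bar>R $$ (b,p)\<bar> \<le> e"
  shows "\<bar>(P * X * transpose_mat R) $$ (a,b)\<bar> \<le> e^2 * (\<Sum>p\<in>{0..<m}. \<Sum>q\<in>{0..<m}. \<bar>X $$ (p,q)\<bar>)"
proof -
  have "\<bar>(P * X * transpose_mat R) $$ (a,b)\<bar> \<le> (\<Sum>p\<in>{0..<m}. \<Sum>q\<in>{0..<m}. \<bar>P $$ (a,p) * X $$ (p,q) * R $$ (b,q)\<bar>)"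
    unfolding entry3[OF assms(1-5)] by (rule order_trans[OF sum_abs sum_mono[OF sum_abs]])
  also have "\<dots> \<le> (\<Sum>p\<in>{0..<m}. \<Sum>q\<in>{0..<m}. e^2 * \<bar>X $$ (p,q)\<bar>)"
  proof (intro sum_mono)
    fix p q assume "p \<in> {0..<m}" "q \<in> {0..<m}"
    hence pq: "p < m" "q < m" by auto
    have e0: "0 \<le> e" using eP[OF pq(1)] by simp
    have "\<bar>P $$ (a,p) * X $$ (p,q) * R $$ (b,q)\<bar> = \<bar>P $$ (a,p)\<bar> * \<bar>R $$ (b,q)\<bar> * \<bar>X $$ (p,q)\<bar>"
      by (simp add: abs_mult ac_simps)
    also have "\<dots> \<le> e * e * \<bar>X $$ (p,q)\<bar>"
      by (intro mult_right_mono mult_mono eP eR pq e0) auto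
    finally show "\<bar>P $$ (a,p) * X $$ (p,q) * R $$ (b,q)\<bar> \<le> e^2 * \<bar>X $$ (p,q)\<bar>" by (simp add: power2_eq_square)
  qed
  also have "\<dots> = e^2 * (\<Sum>p\<in>{0..<m}. \<Sum>q\<in>{0..<m}. \<bar>X $$ (p,q)\<bar>)" by (simp add: sum_distrib_left)
  finally show ?thesis .
qed

lemma pow_mat_Suc': assumes F: "F \<in> carrier_mat n n" shows "F ^\<^sub>m Suc k = F * F ^\<^sub>m k"
proof (induct k)
  case 0 then show ?case using F by simp
next
  case (Suc k)
  have "F ^\<^sub>m Suc (Suc k) = (F * F ^\<^sub>m k) * F" using Suc by simp
  also have "\<dots> = F * (F ^\<^sub>m k * F)" using F by (simp add: assoc_mult_mat[of _ n n _ n _ n])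
  finally show ?case by simp
qed

lemma conj_step:
  assumes F: "(F :: real mat) \<in> carrier_mat n n" and P: "P \<in> carrier_mat n n" and X: "X \<in> carrier_mat n n"
  shows "F * (P * X * transpose_mat P) * transpose_mat F = (F * P) * X * transpose_mat (F * P)"
  using F P X by (simp add: transpose_mult[OF F P] assoc_mult_mat[of _ n n _ n _ n])

lemma self_sprod_nonneg: "0 \<le> (v :: real vec) \<bullet> v"
  unfolding scalar_prod_def by (intro sum_nonneg) auto

lemma quad_expand:
  assumes M: "(M :: real mat) \<in> carrier_mat n n" and x: "x \<in> carrier_vec n"
  shows "x \<bullet> (M *\<^sub>v x) = (\<Sum>a\<in>{0..<n}. \<Sum>b\<in>{0..<n}. x $ a * M $$ (a,b) * x $ b)"
  using M x by (simp add: scalar_prod_def sum_distrib_left ac_simps)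

lemma quad_conj:
  assumes P: "(P :: real mat) \<in> carrier_mat n m" and Y: "Y \<in> carrier_mat m m" and x: "x \<in> carrier_vec n"
  shows "x \<bullet> ((P * Y * transpose_mat P) *\<^sub>v x) = (transpose_mat P *\<^sub>v x) \<bullet> (Y *\<^sub>v (transpose_mat P *\<^sub>v x))"
proof -
  have "(P * Y * transpose_mat P) *\<^sub>v x = P *\<^sub>v (Y *\<^sub>v (transpose_mat P *\<^sub>v x))"
    using assoc_mult_mat_vec[OF mult_carrier_mat[OF P Y] transpose_carrier_mat[THEN iffD2, OF P] x]
      assoc_mult_mat_vec[OF P Y mult_mat_vec_carrier[OF transpose_carrier_mat[THEN iffD2, OF P] x]] by simp
  moreover have "(transpose_mat P *\<^sub>v x) \<bullet> (Y *\<^sub>v (transpose_mat P *\<^sub>v x)) = x \<bullet> (P *\<^sub>v (Y *\<^sub>v (transpose_mat P *\<^sub>v x)))"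
    by (rule transpose_vec_mult_scalar[OF P _ x]) (use P Y x in auto)
  ultimately show ?thesis by simp
qed

lemma gram_nonneg:
  assumes G: "(G :: real mat) \<in> carrier_mat n m" and y: "y \<in> carrier_vec n"
  shows "0 \<le> y \<bullet> ((G * transpose_mat G) *\<^sub>v y)"
proof -
  have "y \<bullet> ((G * transpose_mat G) *\<^sub>v y) = y \<bullet> (G *\<^sub>v (transpose_mat G *\<^sub>v y))"
    using assoc_mult_mat_vec[OF G transpose_carrier_mat[THEN iffD2, OF G] y] by simp
  also have "\<dots> = (transpose_mat G *\<^sub>v y) \<bullet> (transpose_mat G *\<^sub>v y)"
    by (rule transpose_vec_mult_scalar[OF G _ y, symmetric]) (use G y in auto)
  finally show ?thesis using self_sprod_nonneg by simp
qed

lemma suminf_dsum: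
  fixes f :: "'a \<Rightarrow> 'b \<Rightarrow> nat \<Rightarrow> real"
  assumes "\<And>p q. p \<in> A \<Longrightarrow> q \<in> B \<Longrightarrow> summable (f p q)"
  shows "(\<Sum>p\<in>A. \<Sum>q\<in>B. suminf (f p q)) = (\<Sum>i. \<Sum>p\<in>A. \<Sum>q\<in>B. f p q i)"
    and "summable (\<lambda>i. \<Sum>p\<in>A. \<Sum>q\<in>B. f p q i)"
proof -
  have s1: "summable (\<lambda>i. \<Sum>q\<in>B. f p q i)" if "p \<in> A" for p
    using assms that by (intro summable_sum) auto
  show "summable (\<lambda>i. \<Sum>p\<in>A. \<Sum>q\<in>B. f p q i)" by (rule summable_sum) (rule s1)
  have "(\<Sum>p\<in>A. \<Sum>q\<in>B. suminf (f p q)) = (\<Sum>p\<in>A. \<Sum>i. \<Sum>q\<in>B. f p q i)"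
    by (intro sum.cong refl suminf_sum[symmetric]) (auto intro: assms)
  also have "\<dots> = (\<Sum>i. \<Sum>p\<in>A. \<Sum>q\<in>B. f p q i)"
    using s1 by (intro suminf_sum[symmetric]) auto
  finally show "(\<Sum>p\<in>A. \<Sum>q\<in>B. suminf (f p q)) = (\<Sum>i. \<Sum>p\<in>A. \<Sum>q\<in>B. f p q i)" .
qed

lemma lyap:
  fixes F G :: "real mat"
  assumes F: "F \<in> carrier_mat n n" and n: "0 < n" and r: "rho F < 1" and G: "G \<in> carrier_mat n m"
  shows "\<exists>!S. S \<in> carrier_mat n n \<and> S = F * S * transpose_mat F + G * transpose_mat G"
    and "\<And>S x. S \<in> carrier_mat n n \<Longrightarrow> S = F * S * transpose_mat F + G * transpose_mat G \<Longrightarrow>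
           x \<in> carrier_vec n \<Longrightarrow> 0 \<le> x \<bullet> (S *\<^sub>v x)"
proof -
  define Q where "Q = G * transpose_mat G"
  have Q: "Q \<in> carrier_mat n n" unfolding Q_def using G by simp
  from pow_bound[OF F n r] obtain r c where r0: "0 < r" and r1: "r < 1"
    and rc: "\<And>k i j. i < n \<Longrightarrow> j < n \<Longrightarrow> \<bar>(F ^\<^sub>m k) $$ (i,j)\<bar> \<le> c * r^k" by blast
  define sa where "sa X = (\<Sum>p\<in>{0..<n}. \<Sum>q\<in>{0..<n}. \<bar>X $$ (p,q)\<bar>)" for X :: "real mat"
  have bnd: "\<bar>(F ^\<^sub>m k * X * transpose_mat (F ^\<^sub>m k)) $$ (a,b)\<bar> \<le> (c^2 * sa X) * (r^2)^k"
    if X: "X \<in> carrier_mat n n" and ab: "a < n" "b < n" for X k a b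
  proof -
    have "\<bar>(F ^\<^sub>m k * X * transpose_mat (F ^\<^sub>m k)) $$ (a,b)\<bar> \<le> (c * r^k)^2 * sa X"
      unfolding sa_def by (rule entry3_bound[OF pow_carrier_mat[OF F] X pow_carrier_mat[OF F] ab])
        (auto intro: rc ab)
    thus ?thesis by (simp add: power_mult_distrib power_mult[symmetric] mult.commute mult.left_commute)
  qed
  have geo: "summable (\<lambda>k. C * (r^2)^k)" for C
    using r0 r1 by (intro summable_mult summable_geometric) (simp add: abs_less_iff power_less_one_iff)
  have lim0: "(\<lambda>k. C * (r^2)^k) \<longlonglongrightarrow> 0" for C
    using summable_LIMSEQ_zero[OF geo] .
  have conjS: "F ^\<^sub>m Suc k * X * transpose_mat (F ^\<^sub>m Suc k) = F * (F ^\<^sub>m k * X * transpose_mat (F ^\<^sub>m k)) * transpose_mat F"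
    if X: "X \<in> carrier_mat n n" for X k
    unfolding pow_mat_Suc'[OF F] by (rule conj_step[OF F pow_carrier_mat[OF F] X, symmetric])
  have ent: "(F * X * transpose_mat F) $$ (a,b) = (\<Sum>p\<in>{0..<n}. \<Sum>q\<in>{0..<n}. F $$ (a,p) * X $$ (p,q) * F $$ (b,q))"
    if X: "X \<in> carrier_mat n n" and ab: "a < n" "b < n" for X a b
    by (rule entry3[OF F X F ab])
  have uniq: "S1 = S2" if S1: "S1 \<in> carrier_mat n n" "S1 = F * S1 * transpose_mat F + Q"
    and S2: "S2 \<in> carrier_mat n n" "S2 = F * S2 * transpose_mat F + Q" for S1 S2
  proof -
    define D where "D = S1 - S2"
    have D: "D \<in> carrier_mat n n" unfolding D_def using minus_carrier_mat[OF S2(1)] .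
    have DF: "D = F * D * transpose_mat F"
    proof (rule eq_matI)
      fix a b assume ab: "a < dim_row (F * D * transpose_mat F)" "b < dim_col (F * D * transpose_mat F)"
      hence ab: "a < n" "b < n" using F by auto
      have e1: "S1 $$ (a,b) = (F * S1 * transpose_mat F) $$ (a,b) + Q $$ (a,b)"
        using S1 ab F Q by (metis carrier_matD index_add_mat(1) mult_carrier_mat transpose_carrier_mat)
      have e2: "S2 $$ (a,b) = (F * S2 * transpose_mat F) $$ (a,b) + Q $$ (a,b)"
        using S2 ab F Q by (metis carrier_matD index_add_mat(1) mult_carrier_mat transpose_carrier_mat)
      have "(F * D * transpose_mat F) $$ (a,b) = (F * S1 * transpose_mat F) $$ (a,b) - (F * S2 * transpose_mat F) $$ (a,b)"
        unfolding ent[OF D ab] ent[OF S1(1) ab] ent[OF S2(1) ab] sum_subtractf[symmetric]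
        by (intro sum.cong refl) (use S1 S2 in \<open>auto simp: D_def algebra_simps\<close>)
      also have "\<dots> = D $$ (a,b)" using e1 e2 ab S1 S2 unfolding D_def by simp
      finally show "D $$ (a,b) = (F * D * transpose_mat F) $$ (a,b)" by simp
    qed (use F D in auto)
    have Dk: "D = F ^\<^sub>m k * D * transpose_mat (F ^\<^sub>m k)" for k
    proof (induct k)
      case 0 then show ?case using D F by simp
    next
      case (Suc k) then show ?case using conjS[OF D, of k] DF by simp
    qed
    have "D = 0\<^sub>m n n"
    proof (rule eq_matI)
      fix a b assume ab: "a < dim_row (0\<^sub>m n n :: real mat)" "b < dim_col (0\<^sub>m n n :: real mat)"
      hence ab: "a < n" "b < n" by auto
      have "\<bar>D $$ (a,b)\<bar> \<le> 0"
      proof (rule LIMSEQ_le_const[OF lim0])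
        show "\<exists>N. \<forall>k\<ge>N. \<bar>D $$ (a,b)\<bar> \<le> c^2 * sa D * (r^2)^k"
          using bnd[OF D ab] Dk by (metis)
      qed
      thus "D $$ (a,b) = 0\<^sub>m n n $$ (a,b)" using ab by simp
    qed (use D in auto)
    show ?thesis
    proof (rule eq_matI)
      fix a b assume "a < dim_row S2" "b < dim_col S2"
      hence ab: "a < n" "b < n" using S2 by auto
      have "D $$ (a,b) = 0" using \<open>D = 0\<^sub>m n n\<close> ab by simp
      thus "S1 $$ (a,b) = S2 $$ (a,b)" using ab S1 S2 unfolding D_def by simp
    qed (use S1 S2 in auto)
  qed
  define T where "T i = F ^\<^sub>m i * Q * transpose_mat (F ^\<^sub>m i)" for i
  have Tc: "T i \<in> carrier_mat n n" for i unfolding T_def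
    by (rule mult_carrier_mat[OF mult_carrier_mat[OF pow_carrier_mat[OF F] Q] transpose_carrier_mat[THEN iffD2, OF pow_carrier_mat[OF F]]])
  have Ts: "summable (\<lambda>i. T i $$ (a,b))" if ab: "a < n" "b < n" for a b
    by (rule summable_comparison_test'[OF geo[of "c^2 * sa Q"]])
       (use bnd[OF Q ab] in \<open>auto simp: T_def\<close>)
  have TSuc: "T (Suc i) = F * T i * transpose_mat F" for i unfolding T_def by (rule conjS[OF Q])
  have T0: "T 0 = Q" unfolding T_def using F Q by simp
  define S where "S = mat n n (\<lambda>(a,b). \<Sum>i. T i $$ (a,b))"
  have Sc: "S \<in> carrier_mat n n" unfolding S_def by simp
  have Seq: "S = F * S * transpose_mat F + Q"
  proof (rule eq_matI)
    fix a b assume "a < dim_row (F * S * transpose_mat F + Q)" "b < dim_col (F * S * transpose_mat F + Q)"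
    hence ab: "a < n" "b < n" using Q by auto
    have sm: "summable (\<lambda>i. F $$ (a,p) * T i $$ (p,q) * F $$ (b,q))" if "p \<in> {0..<n}" "q \<in> {0..<n}" for p q
      using Ts[of p q] that by (intro summable_mult summable_mult2) auto
    have "(F * S * transpose_mat F) $$ (a,b) = (\<Sum>p\<in>{0..<n}. \<Sum>q\<in>{0..<n}. \<Sum>i. F $$ (a,p) * T i $$ (p,q) * F $$ (b,q))"
      unfolding ent[OF Sc ab]
    proof (intro sum.cong refl)
      fix p q assume "p \<in> {0..<n}" "q \<in> {0..<n}"
      hence pq: "p < n" "q < n" by auto
      show "F $$ (a,p) * S $$ (p,q) * F $$ (b,q) = (\<Sum>i. F $$ (a,p) * T i $$ (p,q) * F $$ (b,q))"
        using pq unfolding S_def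
        by (simp add: suminf_mult2[OF summable_mult[OF Ts[OF pq]], symmetric] suminf_mult[OF Ts[OF pq], symmetric])
    qed
    also have "\<dots> = (\<Sum>i. \<Sum>p\<in>{0..<n}. \<Sum>q\<in>{0..<n}. F $$ (a,p) * T i $$ (p,q) * F $$ (b,q))"
      by (rule suminf_dsum(1)) (rule sm)
    also have "\<dots> = (\<Sum>i. T (Suc i) $$ (a,b))"
      unfolding TSuc ent[OF Tc ab] ..
    also have "\<dots> = S $$ (a,b) - Q $$ (a,b)"
      using suminf_split_head[OF Ts[OF ab]] ab unfolding S_def T0 by simp
    finally show "S $$ (a,b) = (F * S * transpose_mat F + Q) $$ (a,b)" using ab F Q Sc by simp
  qed (use Q Sc in auto)
  have Spsd: "0 \<le> x \<bullet> (S *\<^sub>v x)" if x: "x \<in> carrier_vec n" for x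
  proof -
    have sm: "summable (\<lambda>i. x $ a * T i $$ (a,b) * x $ b)" if "a \<in> {0..<n}" "b \<in> {0..<n}" for a b
      using Ts[of a b] that by (intro summable_mult summable_mult2) auto
    have "x \<bullet> (S *\<^sub>v x) = (\<Sum>a\<in>{0..<n}. \<Sum>b\<in>{0..<n}. \<Sum>i. x $ a * T i $$ (a,b) * x $ b)"
      unfolding quad_expand[OF Sc x]
    proof (intro sum.cong refl)
      fix a b assume "a \<in> {0..<n}" "b \<in> {0..<n}"
      hence ab: "a < n" "b < n" by auto
      show "x $ a * S $$ (a,b) * x $ b = (\<Sum>i. x $ a * T i $$ (a,b) * x $ b)"
        using ab unfolding S_def
        by (simp add: suminf_mult2[OF summable_mult[OF Ts[OF ab]], symmetric] suminf_mult[OF Ts[OF ab], symmetric])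
    qed
    also have "\<dots> = (\<Sum>i. \<Sum>a\<in>{0..<n}. \<Sum>b\<in>{0..<n}. x $ a * T i $$ (a,b) * x $ b)"
      by (rule suminf_dsum(1)) (rule sm)
    also have "\<dots> = (\<Sum>i. x \<bullet> (T i *\<^sub>v x))"
      unfolding quad_expand[OF Tc x] ..
    also have "0 \<le> \<dots>"
    proof (rule suminf_nonneg)
      show "summable (\<lambda>i. x \<bullet> (T i *\<^sub>v x))"
        using suminf_dsum(2)[of "{0..<n}" "{0..<n}" "\<lambda>a b i. x $ a * T i $$ (a,b) * x $ b", OF sm]
        unfolding quad_expand[OF Tc x] by simp
      fix i
      have "x \<bullet> (T i *\<^sub>v x) = (transpose_mat (F ^\<^sub>m i) *\<^sub>v x) \<bullet> (Q *\<^sub>v (transpose_mat (F ^\<^sub>m i) *\<^sub>v x))"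
        unfolding T_def by (rule quad_conj[OF pow_carrier_mat[OF F] Q x])
      also have "0 \<le> \<dots>" unfolding Q_def
        by (rule gram_nonneg[OF G mult_mat_vec_carrier[OF transpose_carrier_mat[THEN iffD2, OF pow_carrier_mat[OF F]] x]])
      finally show "0 \<le> x \<bullet> (T i *\<^sub>v x)" .
    qed
    finally show ?thesis .
  qed
  show "\<exists>!S. S \<in> carrier_mat n n \<and> S = F * S * transpose_mat F + G * transpose_mat G"
    using uniq Sc Seq unfolding Q_def by blast
  show "\<And>S' (x :: real vec). S' \<in> carrier_mat n n \<Longrightarrow> S' = F * S' * transpose_mat F + G * transpose_mat G \<Longrightarrow>
           x \<in> carrier_vec n \<Longrightarrow> 0 \<le> x \<bullet> (S' *\<^sub>v x)"
  proof -
    fix S' and x :: "real vec" assume "S' \<in> carrier_mat n n" "S' = F * S' * transpose_mat F + G * transpose_mat G" "x \<in> carrier_vec n"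
    with uniq[OF _ _ Sc Seq] Spsd show "0 \<le> x \<bullet> (S' *\<^sub>v x)" unfolding Q_def by blast
  qed
qed

lemma quad_scale:
  assumes M: "(M :: real mat) \<in> carrier_mat n n" and x: "x \<in> carrier_vec n"
  shows "(t \<cdot>\<^sub>v x) \<bullet> (M *\<^sub>v (t \<cdot>\<^sub>v x)) = t^2 * (x \<bullet> (M *\<^sub>v x))"
  using M x by (simp add: mult_mat_vec[OF M x] power2_eq_square)

lemma per_L:
  fixes KL DWD :: "real mat"
  assumes KL: "KL \<in> carrier_mat na na" and M: "DWD \<in> carrier_mat na na"
    and KLp: "\<And>x. x \<in> carrier_vec na \<Longrightarrow> 0 \<le> x \<bullet> (KL *\<^sub>v x)"
    and Mp: "\<And>x. x \<in> carrier_vec na \<Longrightarrow> 0 \<le> x \<bullet> (DWD *\<^sub>v x)"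
  shows "Inf {ereal (1/2 * (a \<bullet> (KL *\<^sub>v a))) | a. a \<in> carrier_vec na \<and> a \<bullet> (DWD *\<^sub>v a) \<ge> 1}
       = Sup {ereal lam | lam. lam \<ge> 0 \<and> psd ((1/2) \<cdot>\<^sub>m KL - lam \<cdot>\<^sub>m DWD)}"
proof -
  have eq: "psd ((1/2) \<cdot>\<^sub>m KL - lam \<cdot>\<^sub>m DWD) \<longleftrightarrow>
      (\<forall>x\<in>carrier_vec na. 0 \<le> 1/2 * (x \<bullet> (KL *\<^sub>v x)) - lam * (x \<bullet> (DWD *\<^sub>v x)))" for lam
  proof -
    have "x \<bullet> (((1/2) \<cdot>\<^sub>m KL - lam \<cdot>\<^sub>m DWD) *\<^sub>v x) = 1/2 * (x \<bullet> (KL *\<^sub>v x)) - lam * (x \<bullet> (DWD *\<^sub>v x))"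
      if x: "x \<in> carrier_vec na" for x
    proof -
      have "((1/2) \<cdot>\<^sub>m KL - lam \<cdot>\<^sub>m DWD) *\<^sub>v x = (1/2) \<cdot>\<^sub>v (KL *\<^sub>v x) - lam \<cdot>\<^sub>v (DWD *\<^sub>v x)"
        using KL M x by (simp add: minus_mult_distrib_mat_vec[of _ na na] smult_mat_vec[of _ na na])
      thus ?thesis using KL M x
        by (simp add: scalar_prod_minus_distrib[of x na])
    qed
    moreover have "psd ((1/2) \<cdot>\<^sub>m KL - lam \<cdot>\<^sub>m DWD) \<longleftrightarrow>
       (\<forall>x\<in>carrier_vec na. 0 \<le> x \<bullet> (((1/2) \<cdot>\<^sub>m KL - lam \<cdot>\<^sub>m DWD) *\<^sub>v x))"
      unfolding psd_def using M by simp
    ultimately show ?thesis by simp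
  qed
  show ?thesis unfolding eq
    by (rule slemma[where sc = "\<lambda>t x. t \<cdot>\<^sub>v x"]) (auto simp: quad_scale[OF KL] quad_scale[OF M] KLp Mp)
qed

theorem lemma1:
  fixes nx ny nw na :: nat and A Bw C Dw W L :: "real mat" and j :: "nat \<Rightarrow> nat" and k :: enat
  assumes nx: "0 < nx"
    and A: "A \<in> carrier_mat nx nx" and Bw: "Bw \<in> carrier_mat nx nw"
    and C: "C \<in> carrier_mat ny nx" and Dw: "Dw \<in> carrier_mat ny nw"
    and det: "detectable A C" and stab: "stabilizable A Bw"
    and W: "W \<in> carrier_mat ny ny" "transpose_mat W = W" "psd W"
    and j: "strict_mono_on {..<na} j" "\<forall>i<na. j i < ny"
    and inv: "\<forall>L' \<in> carrier_mat nx ny. rho (A - L' * C) < 1 \<longrightarrow>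
                 invertible_mat (Sigma_r A Bw C Dw L')"
    and k: "k \<in> {0, 1, \<infinity>}"
  shows "(\<forall>L \<in> carrier_mat nx ny. rho (A - L * C) < 1 \<longrightarrow>
            J A Bw C Dw W (attack_mat ny na j) k L =
            Sup { ereal lam | lam. lam \<ge> 0 \<and>
                  psd ((1/2) \<cdot>\<^sub>m KL_mat A Bw C Dw (attack_mat ny na j) k L
                       - lam \<cdot>\<^sub>m (transpose_mat (attack_mat ny na j) * W * attack_mat ny na j)) })
       \<and> Sup { J A Bw C Dw W (attack_mat ny na j) k L | L.
                L \<in> carrier_mat nx ny \<and> rho (A - L * C) < 1 }
         = Sup { ereal lam | lam L. L \<in> carrier_mat nx ny \<and> lam \<ge> 0 \<and>
                  psd ((1/2) \<cdot>\<^sub>m KL_mat A Bw C Dw (attack_mat ny na j) k L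
                       - lam \<cdot>\<^sub>m (transpose_mat (attack_mat ny na j) * W * attack_mat ny na j))
                  \<and> rho (A - L * C) < 1 }"
proof -
  define Da where "Da = attack_mat ny na j"
  have Da: "Da \<in> carrier_mat ny na" unfolding Da_def attack_mat_def by simp
  have main: "J A Bw C Dw W Da k L =
      Sup { ereal lam | lam. lam \<ge> 0 \<and>
                  psd ((1/2) \<cdot>\<^sub>m KL_mat A Bw C Dw Da k L - lam \<cdot>\<^sub>m (transpose_mat Da * W * Da)) }"
    if L: "L \<in> carrier_mat nx ny" and rL: "rho (A - L * C) < 1" for L
  proof -
    define F where "F = A - L * C"
    have Fc: "F \<in> carrier_mat nx nx" unfolding F_def by (rule minus_carrier_mat[OF mult_carrier_mat[OF L C]])
    define Gm where "Gm = Bw - L * Dw"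
    have Gc: "Gm \<in> carrier_mat nx nw" unfolding Gm_def by (rule minus_carrier_mat[OF mult_carrier_mat[OF L Dw]])
    define Sx where "Sx = Sigma_x A Bw C Dw L"
    have rF: "rho F < 1" using rL unfolding F_def .
    have dA: "dim_row A = nx" using A by simp
    have Sx: "Sx \<in> carrier_mat nx nx \<and> Sx = F * Sx * transpose_mat F + Gm * transpose_mat Gm"
      unfolding Sx_def Sigma_x_def dA F_def[symmetric] Gm_def[symmetric]
      by (rule theI'[OF lyap(1)[OF Fc nx rF Gc]])
    have Sxp: "0 \<le> x \<bullet> (Sx *\<^sub>v x)" if "x \<in> carrier_vec nx" for x
      using lyap(2)[OF Fc nx rF Gc] Sx that by blast
    define Sr where "Sr = Sigma_r A Bw C Dw L"
    have Sr_eq: "Sr = C * Sx * transpose_mat C + Dw * transpose_mat Dw" unfolding Sr_def Sigma_r_def Sx_def ..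
    have CSC: "C * Sx * transpose_mat C \<in> carrier_mat ny ny"
      using mult_carrier_mat[OF mult_carrier_mat[OF C conjunct1[OF Sx]] transpose_carrier_mat[THEN iffD2, OF C]] .
    have DD: "Dw * transpose_mat Dw \<in> carrier_mat ny ny"
      using mult_carrier_mat[OF Dw transpose_carrier_mat[THEN iffD2, OF Dw]] .
    have Src: "Sr \<in> carrier_mat ny ny" unfolding Sr_eq using CSC DD by simp
    have Srp: "0 \<le> y \<bullet> (Sr *\<^sub>v y)" if y: "y \<in> carrier_vec ny" for y
    proof -
      have "y \<bullet> (Sr *\<^sub>v y) = y \<bullet> ((C * Sx * transpose_mat C) *\<^sub>v y) + y \<bullet> ((Dw * transpose_mat Dw) *\<^sub>v y)"
        unfolding Sr_eq add_mult_distrib_mat_vec[OF CSC DD y]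
        by (rule scalar_prod_add_distrib[OF y]) (use CSC DD y in auto)
      also have "y \<bullet> ((C * Sx * transpose_mat C) *\<^sub>v y) = (transpose_mat C *\<^sub>v y) \<bullet> (Sx *\<^sub>v (transpose_mat C *\<^sub>v y))"
        by (rule quad_conj[OF C conjunct1[OF Sx] y])
      finally show ?thesis
        using Sxp[OF mult_mat_vec_carrier[OF transpose_carrier_mat[THEN iffD2, OF C] y]] gram_nonneg[OF Dw y]
        by simp
    qed
    have "invertible_mat Sr" using inv L rL unfolding Sr_def by blast
    then obtain B where B1: "Sr * B = 1\<^sub>m (dim_row Sr)" and B2: "B * Sr = 1\<^sub>m (dim_row B)"
      unfolding invertible_mat_def inverts_mat_def by blast
    have Bc: "B \<in> carrier_mat ny ny"
    proof -
      have "dim_col B = ny" using arg_cong[OF B1, of dim_col] Src by simp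
      moreover have "dim_row B = ny" using arg_cong[OF B2, of dim_col] Src by simp
      ultimately show ?thesis by auto
    qed
    define Si where "Si = mat_inv Sr"
    have "\<exists>N. N \<in> carrier_mat (dim_row Sr) (dim_row Sr) \<and> inverts_mat Sr N \<and> inverts_mat N Sr"
      using Bc B1 B2 Src unfolding inverts_mat_def by (intro exI[of _ B]) auto
    from someI_ex[OF this] have Si: "Si \<in> carrier_mat ny ny" "Sr * Si = 1\<^sub>m ny"
      unfolding Si_def mat_inv_def inverts_mat_def using Src by auto
    have Sip: "0 \<le> y \<bullet> (Si *\<^sub>v y)" if y: "y \<in> carrier_vec ny" for y
    proof -
      define z where "z = Si *\<^sub>v y"
      have z: "z \<in> carrier_vec ny" unfolding z_def using Si y by simp
      have "Sr *\<^sub>v z = y" unfolding z_def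
        using assoc_mult_mat_vec[OF Src Si(1) y, symmetric] Si(2) y by simp
      hence "y \<bullet> (Si *\<^sub>v y) = (Sr *\<^sub>v z) \<bullet> z" unfolding z_def by simp
      also have "\<dots> = z \<bullet> (Sr *\<^sub>v z)" by (rule comm_scalar_prod[of _ ny]) (use Src z in auto)
      finally show ?thesis using Srp[OF z] by simp
    qed
    define P where "P = Phi A C k L"
    have Pc: "P \<in> carrier_mat ny ny"
    proof -
      have "k = 0 \<or> k = 1 \<or> k = \<infinity>" using k by simp
      then show ?thesis
      proof (elim disjE)
        assume k0: "k = 0"
        have e: "P = 1\<^sub>m ny - C * 0\<^sub>m nx ny" unfolding P_def k0 Phi_def Phi_fin_def zero_enat_def
          using C A by simp
        show ?thesis unfolding e
          by (rule carrier_matI) (simp_all only: index_minus_mat index_mult_mat index_zero_mat carrier_matD[OF C])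
      next
        assume k1: "k = 1"
        have e: "P = 1\<^sub>m ny - C * (0\<^sub>m nx ny + (A - L * C) ^\<^sub>m 0 * L)"
          unfolding P_def k1 Phi_def Phi_fin_def one_enat_def using C A by simp
        have d1: "dim_col (0\<^sub>m nx ny + (A - L * C) ^\<^sub>m 0 * L) = ny" using L by simp
        show ?thesis unfolding e
          by (rule carrier_matI) (simp_all only: index_minus_mat index_mult_mat d1 carrier_matD[OF C])
      next
        assume ki: "k = \<infinity>"
        have e: "P = 1\<^sub>m ny - C * mat_inv (1\<^sub>m nx - A + L * C) * L"
          unfolding P_def ki Phi_def Phi_inf_def using C A by simp
        show ?thesis unfolding e
          by (rule carrier_matI) (simp_all only: index_minus_mat index_mult_mat carrier_matD[OF C] carrier_matD[OF L])
      qed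
    qed
    define Bm where "Bm = P * Da"
    have Bmc: "Bm \<in> carrier_mat ny na" unfolding Bm_def using Pc Da by simp
    have BmT: "transpose_mat Bm \<in> carrier_mat na ny" using Bmc by simp
    have Xc: "transpose_mat Da * transpose_mat P * Si \<in> carrier_mat na ny" using Da Pc Si(1) by simp
    have KLeq: "KL_mat A Bw C Dw Da k L = transpose_mat Bm * Si * transpose_mat (transpose_mat Bm)"
    proof -
      have "KL_mat A Bw C Dw Da k L = transpose_mat Da * transpose_mat P * Si * P * Da"
        unfolding KL_mat_def P_def Sr_def Si_def ..
      also have "\<dots> = transpose_mat Da * transpose_mat P * Si * (P * Da)" by (rule assoc_mult_mat[OF Xc Pc Da])
      also have "\<dots> = transpose_mat Bm * Si * transpose_mat (transpose_mat Bm)"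
        unfolding transpose_transpose unfolding Bm_def transpose_mult[OF Pc Da] ..
      finally show ?thesis .
    qed
    have KLc: "KL_mat A Bw C Dw Da k L \<in> carrier_mat na na" unfolding KLeq using BmT Si(1) by simp
    have KLp: "0 \<le> x \<bullet> (KL_mat A Bw C Dw Da k L *\<^sub>v x)" if x: "x \<in> carrier_vec na" for x
      unfolding KLeq quad_conj[OF BmT Si(1) x]
      by (rule Sip) (use Bmc x in simp)
    have Mc: "transpose_mat Da * W * Da \<in> carrier_mat na na" using Da W(1) by simp
    have Mp: "0 \<le> x \<bullet> ((transpose_mat Da * W * Da) *\<^sub>v x)" if x: "x \<in> carrier_vec na" for x
    proof -
      have DaT: "transpose_mat Da \<in> carrier_mat na ny" using Da by simp
      have "x \<bullet> ((transpose_mat Da * W * Da) *\<^sub>v x) = (Da *\<^sub>v x) \<bullet> (W *\<^sub>v (Da *\<^sub>v x))"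
        using quad_conj[OF DaT W(1) x] by simp
      also have "0 \<le> \<dots>" using W(3) Da x W(1) unfolding psd_def by auto
      finally show ?thesis .
    qed
    have dc: "dim_col Da = na" using Da by simp
    show ?thesis unfolding J_def dc
      by (rule per_L[OF KLc Mc KLp Mp])
  qed
  show ?thesis
  proof (intro conjI ballI impI)
    fix L assume "L \<in> carrier_mat nx ny" "rho (A - L * C) < 1"
    then show "J A Bw C Dw W (attack_mat ny na j) k L =
            Sup { ereal lam | lam. lam \<ge> 0 \<and>
                  psd ((1/2) \<cdot>\<^sub>m KL_mat A Bw C Dw (attack_mat ny na j) k L
                       - lam \<cdot>\<^sub>m (transpose_mat (attack_mat ny na j) * W * attack_mat ny na j)) }"
      using main unfolding Da_def by blast
  next
    let ?R = "\<lambda>L. { ereal lam | lam. lam \<ge> 0 \<and>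
                  psd ((1/2) \<cdot>\<^sub>m KL_mat A Bw C Dw Da k L - lam \<cdot>\<^sub>m (transpose_mat Da * W * Da)) }"
    have "Sup { J A Bw C Dw W Da k L | L. L \<in> carrier_mat nx ny \<and> rho (A - L * C) < 1 }
        = Sup { ereal lam | lam L. L \<in> carrier_mat nx ny \<and> lam \<ge> 0 \<and>
                  psd ((1/2) \<cdot>\<^sub>m KL_mat A Bw C Dw Da k L - lam \<cdot>\<^sub>m (transpose_mat Da * W * Da))
                  \<and> rho (A - L * C) < 1 }" (is "Sup ?X = Sup ?Y")
    proof (rule antisym)
      show "Sup ?X \<le> Sup ?Y"
      proof (rule Sup_least, clarify)
        fix L assume L: "L \<in> carrier_mat nx ny" "rho (A - L * C) < 1"
        have "?R L \<subseteq> ?Y" using L by blast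
        thus "J A Bw C Dw W Da k L \<le> Sup ?Y" unfolding main[OF L] by (rule Sup_subset_mono)
      qed
      show "Sup ?Y \<le> Sup ?X"
      proof (rule Sup_least, clarify)
        fix lam L assume H: "L \<in> carrier_mat nx ny" "0 \<le> lam"
          "psd ((1/2) \<cdot>\<^sub>m KL_mat A Bw C Dw Da k L - lam \<cdot>\<^sub>m (transpose_mat Da * W * Da))"
          "rho (A - L * C) < 1"
        have "ereal lam \<le> Sup (?R L)" using H by (intro Sup_upper) blast
        also have "\<dots> = J A Bw C Dw W Da k L" using main[OF H(1) H(4)] by simp
        also have "\<dots> \<le> Sup ?X" using H by (intro Sup_upper) blast
        finally show "ereal lam \<le> Sup ?X" .
      qed
    qed
    then show "Sup { J A Bw C Dw W (attack_mat ny na j) k L | L.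
                L \<in> carrier_mat nx ny \<and> rho (A - L * C) < 1 }
         = Sup { ereal lam | lam L. L \<in> carrier_mat nx ny \<and> lam \<ge> 0 \<and>
                  psd ((1/2) \<cdot>\<^sub>m KL_mat A Bw C Dw (attack_mat ny na j) k L
                       - lam \<cdot>\<^sub>m (transpose_mat (attack_mat ny na j) * W * attack_mat ny na j))
                  \<and> rho (A - L * C) < 1 }" unfolding Da_def .
  qed
qed

end
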